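(* Let $N\ge1$ be an integer, $\sigma^2>0$, $R>0$, $\gamma>0$ and $\alpha\in(0,1]$. Consider the problem $$\min_{p_0,\dots,p_{N-1}\ge0}\ \frac{\gamma}{N}\sum_{n=0}^{N-1}p_n^{\alpha}\quad\text{s.t.}\quad \frac1N\sum_{n=0}^{N-1}\log_2\!\left(1+\frac{p_n}{\sigma^2}\right)=R.$$ Then every optimal solution allocates equal power to all active slots: for all $n,n'$, if $p_n>0$ and $p_{n'}>0$ then $p_n=p_{n'}$. *)

theory Defs
  imports "HOL-Analysis.Analysis"
begin

definition feasible :: "nat \<Rightarrow> real \<Rightarrow> real \<Rightarrow> (nat \<Rightarrow> real) \<Rightarrow> bool" where
  "feasible N sigma2 R p \<longleftrightarrow>
     (\<forall>n<N. p n \<ge> 0) \<and>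
     (1 / real N) * (\<Sum>n<N. log 2 (1 + p n / sigma2)) = R"

definition objective :: "nat \<Rightarrow> real \<Rightarrow> real \<Rightarrow> (nat \<Rightarrow> real) \<Rightarrow> real" where
  "objective N gamma alpha p = (gamma / real N) * (\<Sum>n<N. p n powr alpha)"

definition optimal :: "nat \<Rightarrow> real \<Rightarrow> real \<Rightarrow> real \<Rightarrow> real \<Rightarrow> (nat \<Rightarrow> real) \<Rightarrow> bool" where
  "optimal N sigma2 R gamma alpha p \<longleftrightarrow>
     feasible N sigma2 R p \<and>
     (\<forall>q. feasible N sigma2 R q \<longrightarrow> objective N gamma alpha p \<le> objective N gamma alpha q)"

end

theory Submission
  imports Defs "HOL-Analysis.Analysis"
begin


definition Lf :: "real \<Rightarrow> real \<Rightarrow> real" where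
  "Lf al z = ln (1 - al + al * z) - al * ln z"

lemma Lf_pos: "0 < (al::real) \<Longrightarrow> al < 1 \<Longrightarrow> 0 < (z::real) \<Longrightarrow> 0 < 1 - al + al * z"
proof -
  assume "0 < al" "al < 1" "0 < z"
  then have "0 < al * z" by (simp add: mult_pos_pos)
  then show ?thesis using \<open>al < 1\<close> by linarith
qed

lemma Lf_deriv:
  assumes "0 < al" "al < 1" "0 < z"
  shows "(Lf al has_real_derivative (al / (1 - al + al * z) - al / z)) (at z)"
proof -
  have p: "0 < 1 - al + al * z" by (rule Lf_pos[OF assms])
  have inner: "((\<lambda>z. 1 - al + al*z) has_real_derivative al) (at z)"
    by (auto intro!: derivative_eq_intros)
  have l1: "((\<lambda>z. ln (1 - al + al*z)) has_real_derivative (1/(1-al+al*z)) * al) (at z)"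
    by (rule DERIV_chain2[OF DERIV_ln_divide[OF p] inner])
  have l2: "((\<lambda>z. al * ln z) has_real_derivative al * (1/z)) (at z)"
    by (rule DERIV_cmult[OF DERIV_ln_divide[OF \<open>0 < z\<close>]])
  have "((\<lambda>z. ln (1 - al + al * z) - al * ln z) has_real_derivative
     (1 / (1 - al + al * z)) * al - al * (1 / z)) (at z)"
    by (rule DERIV_diff[OF l1 l2])
  then show ?thesis unfolding Lf_def[abs_def] by simp
qed

lemma Lf_cont:
  assumes "0 < al" "al < 1" "0 < a"
  shows "continuous_on {a..b} (Lf al)"
proof (rule DERIV_continuous_on)
  fix x assume "x \<in> {a..b}"
  then have "0 < x" using assms by simp
  show "(Lf al has_field_derivative (al / (1 - al + al * x) - al / x)) (at x within {a..b})"
    by (rule has_field_derivative_at_within[OF Lf_deriv[OF assms(1,2) \<open>0 < x\<close>]])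
qed

lemma Lf_dec:
  assumes "0 < al" "al < 1" "0 < z1" "z1 < z2" "z2 \<le> 1"
  shows "Lf al z2 < Lf al z1"
proof (rule DERIV_neg_imp_decreasing_open[OF \<open>z1 < z2\<close>])
  fix x assume x: "z1 < x" "x < z2"
  have p: "0 < 1 - al + al * x" using Lf_pos[of al x] assms x by simp
  have "al / (1 - al + al * x) - al / x < 0"
  proof -
    have "(1-al)*(1-x) > 0" using assms x by (intro mult_pos_pos) auto
    then have "x < 1 - al + al * x" by (simp add: algebra_simps)
    then have "al / (1 - al + al * x) < al / x" using assms x p
      by (intro divide_strict_left_mono) auto
    then show ?thesis by simp
  qed
  then show "\<exists>y. (Lf al has_real_derivative y) (at x) \<and> y < 0"
    using Lf_deriv[of al x] assms x by auto
next
  show "continuous_on {z1..z2} (Lf al)"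
    by (rule Lf_cont) (use assms in auto)
qed

lemma Lf_inc:
  assumes "0 < al" "al < 1" "1 \<le> z1" "z1 < z2"
  shows "Lf al z1 < Lf al z2"
proof (rule DERIV_pos_imp_increasing_open[OF \<open>z1 < z2\<close>])
  fix x assume x: "z1 < x" "x < z2"
  have p: "0 < 1 - al + al * x" using Lf_pos[of al x] assms x by simp
  have "al / (1 - al + al * x) - al / x > 0"
  proof -
    have "(1-al)*(x-1) > 0" using assms x by (intro mult_pos_pos) auto
    then have "x > 1 - al + al * x" by (simp add: algebra_simps)
    then have "al / (1 - al + al * x) > al / x" using assms x p
      by (intro divide_strict_left_mono) auto
    then show ?thesis by simp
  qed
  then show "\<exists>y. (Lf al has_real_derivative y) (at x) \<and> y > 0"
    using Lf_deriv[of al x] assms x by auto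
next
  show "continuous_on {z1..z2} (Lf al)"
    by (rule Lf_cont) (use assms in auto)
qed

lemma pair_frac: "\<lbrakk>(y::real) \<noteq> 1; 1 + y \<noteq> 0\<rbrakk> \<Longrightarrow> al/(1+y) + al/(1-y) = 2*al/(1 - y^2)"
proof -
  assume a: "(y::real) \<noteq> 1" "1 + y \<noteq> 0"
  have b: "1 - y^2 = (1+y)*(1-y)" by (simp add: algebra_simps power2_eq_square)
  have c: "1 - y \<noteq> 0" using a by simp
  show ?thesis unfolding b using a c by (simp add: divide_simps) (simp add: algebra_simps)
qed

lemma H_neg:
  assumes "0 < al" "al < 1" "0 < e" "e < 1"
  shows "Lf al (1 + e) < Lf al (1 - e)"
proof -
  define H where "H = (\<lambda>x. Lf al (1 + x) - Lf al (1 - x))"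
  have der: "(H has_real_derivative
      ((al / (1 - al + al * (1 + x)) - al / (1 + x)) * 1 - (al / (1 - al + al * (1 - x)) - al / (1 - x)) * (- 1))) (at x)"
    if "0 \<le> x" "x < 1" for x
  proof -
    have d1: "((\<lambda>x. 1 + x) has_real_derivative 1) (at x)" by (auto intro!: derivative_eq_intros)
    have d2: "((\<lambda>x. 1 - x) has_real_derivative -1) (at x)" by (auto intro!: derivative_eq_intros)
    show ?thesis unfolding H_def
      by (intro derivative_intros DERIV_chain2[OF Lf_deriv] d1 d2) (use assms that in auto)
  qed
  have "H e < H 0"
  proof (rule DERIV_neg_imp_decreasing_open[OF \<open>0 < e\<close>])
    fix x assume x: "0 < x" "x < e"
    have 1: "1 - al + al * (1 + x) = 1 + al * x" "1 - al + al * (1 - x) = 1 - al * x"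
      by (simp_all add: algebra_simps)
    have ax: "al * x < x" using x assms by simp
    have ax0: "0 < al * x" using x assms by simp
    have "al / (1 + al * x) - al / (1 + x) + (al / (1 - al * x) - al / (1 - x))
          = 2 * al / (1 - (al*x)^2) - 2 * al / (1 - x^2)"
    proof -
      have "al*x < 1" "x < 1" using ax x assms by linarith+
      then have "al*x \<noteq> 1" "1 + al*x \<noteq> 0" "x \<noteq> 1" "1 + x \<noteq> 0" using ax0 x by auto
      then show ?thesis using pair_frac[of "al*x" al] pair_frac[of x al] by (simp add: algebra_simps)
    qed
    also have "\<dots> < 0"
    proof -
      have "(al*x)^2 < x^2" using ax ax0 by (simp add: power_strict_mono)
      moreover have "x^2 < 1" using x assms by (simp add: power_less_one_iff abs_less_iff)
      ultimately have "2 * al / (1 - x^2) > 2 * al / (1 - (al*x)^2)"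
        using assms by (intro divide_strict_left_mono) auto
      then show ?thesis by simp
    qed
    finally show "\<exists>y. (H has_real_derivative y) (at x) \<and> y < 0"
      using der[of x] x assms 1 by auto
  next
    show "continuous_on {0..e} H"
      by (rule DERIV_continuous_on[OF has_field_derivative_at_within[OF der]]) (use assms in auto)
  qed
  moreover have "H 0 = 0" by (simp add: H_def)
  ultimately show ?thesis by (simp add: H_def)
qed

lemma zsum:
  assumes "0 < al" "al < 1" "0 < z1" "z1 < z2" "Lf al z1 = Lf al z2"
  shows "z1 + z2 > 2"
proof (rule ccontr)
  assume "\<not> z1 + z2 > 2"
  then have s: "z1 + z2 \<le> 2" by simp
  show False
  proof (cases "z2 \<le> 1")
    case True
    then show False using Lf_dec[OF assms(1,2,3,4)] assms(5) by simp
  next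
    case False
    define e where "e = 1 - z1"
    have e: "0 < e" "e < 1" using s False assms unfolding e_def by auto
    have "Lf al z2 \<le> Lf al (1 + e)"
    proof (cases "z2 = 1 + e")
      case False
      then have "z2 < 1 + e" using s unfolding e_def by simp
      then show ?thesis using Lf_inc[OF assms(1,2), of z2 "1+e"] \<open>\<not> z2 \<le> 1\<close> by simp
    qed simp
    also have "\<dots> < Lf al (1 - e)" by (rule H_neg) (use assms e in auto)
    also have "1 - e = z1" by (simp add: e_def)
    finally show False using assms(5) by simp
  qed
qed



lemma Lf_val:
  assumes "0 < al" "al < 1" "0 < a"
  shows "Lf al ((1-al)/(al*a)) = (1-al)*ln(1-al) + al*ln al + ln(1+a) + (al-1)*ln a"
proof -
  have e1: "1 - al + al * ((1-al)/(al*a)) = (1-al)*(1+a)/a"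
    using assms by (simp add: field_simps)
  have l1: "ln ((1-al)*(1+a)/a) = ln(1-al) + ln(1+a) - ln a"
    using assms by (simp add: ln_div ln_mult)
  have l2: "ln ((1-al)/(al*a)) = ln(1-al) - ln al - ln a"
    using assms by (simp add: ln_div ln_mult)
  show ?thesis unfolding Lf_def e1 l1 l2 by (simp add: algebra_simps)
qed

lemma alg:
  fixes al A B :: real
  assumes "0 < al" "al < 1" "B > 1" "A > B"
    and eq: "(A - 1) powr (al - 1) * A = (B - 1) powr (al - 1) * B"
  shows "(al - 1) * (A - 1) powr (al - 2) * A * A + (A - 1) powr (al - 1) * A
        + ((al - 1) * (B - 1) powr (al - 2) * B * B + (B - 1) powr (al - 1) * B) < 0"
proof -
  define a where "a = A - 1"
  define b where "b = B - 1"
  have ab: "0 < b" "b < a" using assms by (auto simp: a_def b_def)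
  have A: "A = 1 + a" and B: "B = 1 + b" by (simp_all add: a_def b_def)
  define Phi where "Phi = a powr (al - 1) * A"
  have Phi_pos: "Phi > 0" using ab assms by (simp add: Phi_def)
  have PhiB: "Phi = b powr (al - 1) * B" using eq by (simp add: Phi_def a_def b_def)
  have pa: "a powr (al - 2) = a powr (al - 1) / a"
  proof -
    have "a powr ((al - 1) - 1) = a powr (al - 1) / a powr 1" by (rule powr_diff)
    moreover have "(al - 1) - 1 = al - 2" by simp
    ultimately show ?thesis using ab by (simp add: powr_one)
  qed
  have pb: "b powr (al - 2) = b powr (al - 1) / b"
  proof -
    have "b powr ((al - 1) - 1) = b powr (al - 1) / b powr 1" by (rule powr_diff)
    moreover have "(al - 1) - 1 = al - 2" by simp
    ultimately show ?thesis using ab by (simp add: powr_one)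
  qed
  have lhs: "(al - 1) * (A - 1) powr (al - 2) * A * A + (A - 1) powr (al - 1) * A
        + ((al - 1) * (B - 1) powr (al - 2) * B * B + (B - 1) powr (al - 1) * B)
        = Phi * ((al - 1) * A / a + 1) + Phi * ((al - 1) * B / b + 1)"
  proof -
    have e: "A - 1 = a" "B - 1 = b" by (simp_all add: a_def b_def)
    have "(al - 1) * (A - 1) powr (al - 2) * A * A + (A - 1) powr (al - 1) * A
        + ((al - 1) * (B - 1) powr (al - 2) * B * B + (B - 1) powr (al - 1) * B)
        = a powr (al - 1) * A * ((al - 1) * A / a + 1) + b powr (al - 1) * B * ((al - 1) * B / b + 1)"
      unfolding e pa pb using ab by (simp add: field_simps)
    then show ?thesis unfolding Phi_def PhiB[unfolded Phi_def] .
  qed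
  define z1 where "z1 = (1-al)/(al*a)"
  define z2 where "z2 = (1-al)/(al*b)"
  have z12: "0 < z1" "z1 < z2"
    using ab assms unfolding z1_def z2_def
    by (auto intro!: divide_pos_pos divide_strict_left_mono mult_strict_left_mono)
  have lneq: "ln(1+a) + (al-1)*ln a = ln(1+b) + (al-1)*ln b"
  proof -
    have "ln (a powr (al - 1) * A) = ln (b powr (al - 1) * B)" using PhiB Phi_def by simp
    then show ?thesis using ab by (simp add: ln_mult ln_powr A B)
  qed
  have "Lf al z1 = Lf al z2"
    unfolding z1_def z2_def using Lf_val[OF assms(1,2), of a] Lf_val[OF assms(1,2), of b] ab lneq
    by simp
  then have "z1 + z2 > 2" using zsum[OF assms(1,2) z12] by simp
  then have "al * (z1 + z2) > al * 2" using assms by simp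
  moreover have "al * (z1 + z2) = (1-al)/a + (1-al)/b"
    unfolding z1_def z2_def using ab assms by (simp add: field_simps)
  ultimately have key: "(1-al)/a + (1-al)/b > 2 * al" by simp
  have "(al - 1) * A / a + 1 + ((al - 1) * B / b + 1) = 2*al - ((1-al)/a + (1-al)/b)"
    unfolding A B using ab by (simp add: field_simps)
  also have "\<dots> < 0" using key by simp
  finally have "(al - 1) * A / a + 1 + ((al - 1) * B / b + 1) < 0" .
  then have "Phi * ((al - 1) * A / a + 1 + ((al - 1) * B / b + 1)) < 0"
    using Phi_pos by (simp add: mult_pos_neg)
  then show ?thesis unfolding lhs by (simp add: algebra_simps)
qed



lemma powr_comp_deriv:
  fixes f :: "real \<Rightarrow> real"
  assumes "(f has_real_derivative f') (at t)" "f t > 0"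
  shows "((\<lambda>t. f t powr r) has_real_derivative r * f t powr (r - 1) * f') (at t)"
  using DERIV_chain2[OF has_real_derivative_powr[OF assms(2)] assms(1)] by simp

lemma core:
  fixes al K t0 :: real
  assumes al: "0 < al" "al \<le> 1" and K: "1 < K" and t0: "0 < t0" "t0 < ln K"
  shows "\<exists>t\<in>{0..ln K}. (K*exp t - 1) powr al + (K*exp(-t) - 1) powr al
          < (K*exp t0 - 1) powr al + (K*exp(-t0) - 1) powr al"
proof (rule ccontr)
  assume nc: "\<not> ?thesis"
  define L where "L = ln K"
  define A where "A = (\<lambda>t::real. K * exp t)"
  define B where "B = (\<lambda>t::real. K * exp (-t))"
  define G where "G = (\<lambda>t. (A t - 1) powr al + (B t - 1) powr al)"
  define D where "D = (\<lambda>t. (A t - 1) powr (al - 1) * A t - (B t - 1) powr (al - 1) * B t)"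
  define D' where "D' = (\<lambda>t. (al - 1) * (A t - 1) powr (al - 2) * A t * A t + (A t - 1) powr (al - 1) * A t
        + ((al - 1) * (B t - 1) powr (al - 2) * B t * B t + (B t - 1) powr (al - 1) * B t))"
  have Kpos: "K > 0" using K by simp
  have AL: "A t = exp (L + t)" "B t = exp (L - t)" for t
    unfolding A_def B_def L_def using Kpos by (simp_all add: exp_add exp_diff exp_minus field_simps)
  have A1: "A t > 1" if "-L < t" for t
    unfolding AL using that by simp
  have B1: "B t > 1" if "t < L" for t
    unfolding AL using that by simp
  have min: "G t0 \<le> G t" if "t \<in> {0..L}" for t
    using nc that unfolding G_def A_def B_def L_def by force
  have dA: "(A has_real_derivative A t) (at t)" for t
    unfolding A_def by (auto intro!: derivative_eq_intros)
  have dB: "(B has_real_derivative - B t) (at t)" for t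
    unfolding B_def by (auto intro!: derivative_eq_intros)
  have dA1: "((\<lambda>t. A t - 1) has_real_derivative A t) (at t)" for t
    by (rule DERIV_cong[OF DERIV_diff[OF dA DERIV_const]]) simp
  have dB1: "((\<lambda>t. B t - 1) has_real_derivative - B t) (at t)" for t
    by (rule DERIV_cong[OF DERIV_diff[OF dB DERIV_const]]) simp
  have dG: "(G has_real_derivative al * D t) (at t)" if "-L < t" "t < L" for t
  proof -
    have "(G has_real_derivative al * (A t - 1) powr (al - 1) * A t + al * (B t - 1) powr (al - 1) * (- B t)) (at t)"
      unfolding G_def
      by (intro DERIV_add powr_comp_deriv dA1 dB1) (use A1[OF that(1)] B1[OF that(2)] in auto)
    then show ?thesis by (rule DERIV_cong) (simp add: D_def algebra_simps)
  qed
  have dD: "(D has_real_derivative D' t) (at t)" if "-L < t" "t < L" for t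
  proof -
    have e: "al - 1 - 1 = al - 2" by simp
    have pA: "((\<lambda>t. (A t - 1) powr (al - 1) * A t) has_real_derivative
        ((al - 1) * (A t - 1) powr (al - 1 - 1) * A t) * A t + A t * (A t - 1) powr (al - 1)) (at t)"
      by (rule DERIV_mult[OF powr_comp_deriv[OF dA1] dA]) (use A1[OF that(1)] in auto)
    have pB: "((\<lambda>t. (B t - 1) powr (al - 1) * B t) has_real_derivative
        ((al - 1) * (B t - 1) powr (al - 1 - 1) * (- B t)) * B t + (- B t) * (B t - 1) powr (al - 1)) (at t)"
      by (rule DERIV_mult[OF powr_comp_deriv[OF dB1] dB]) (use B1[OF that(2)] in auto)
    show ?thesis unfolding D_def
      by (rule DERIV_cong[OF DERIV_diff[OF pA pB]]) (simp add: D'_def e algebra_simps)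
  qed
  have Lpos: "0 < L" using t0 by (simp add: L_def)
  have t0L: "-L < t0" "t0 < L" using t0 Lpos by (auto simp: L_def)
  have "al * D t0 = 0"
  proof (rule DERIV_local_min[OF dG[OF t0L] _ allI[OF impI]])
    show "0 < min t0 (L - t0)" using t0L t0 by simp
  next
    fix y assume "\<bar>t0 - y\<bar> < min t0 (L - t0)"
    then have "y \<in> {0..L}" by auto
    then show "G t0 \<le> G y" by (rule min)
  qed
  then have D0: "D t0 = 0" using al by simp
  have AB: "B t0 < A t0" unfolding AL using t0 by simp
  have B0: "B t0 > 1" using B1 t0L by simp
  show False
  proof (cases "al = 1")
    case True
    then have "D t0 = A t0 - B t0" unfolding D_def using AB B0 by simp
    then show False using D0 AB by simp
  next
    case False
    then have al1: "al < 1" using al by simp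
    have "D' t0 < 0" unfolding D'_def
      by (rule alg[OF al(1) al1 B0 AB]) (use D0 in \<open>simp add: D_def\<close>)
    then obtain d where d: "d > 0" "\<And>h. h > 0 \<Longrightarrow> h < d \<Longrightarrow> D t0 > D (t0 + h)"
      using DERIV_neg_dec_right[OF dD[OF t0L]] by blast
    define h where "h = min (d/2) ((L - t0)/2)"
    have "h \<le> (L - t0)/2" unfolding h_def by (rule min.cobounded2)
    then have h: "0 < h" "h < d" "t0 + h < L" using d t0L by (auto simp: h_def)
    obtain z where z: "t0 < z" "z < t0 + h" "G (t0 + h) - G t0 = (t0 + h - t0) * (al * D z)"
      using MVT2[of t0 "t0 + h" G "\<lambda>t. al * D t"] dG h t0L by force
    have "D z < 0"
      using d(2)[of "z - t0"] z h D0 by simp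
    then have "al * D z < 0" using al by (simp add: mult_pos_neg)
    then have "h * (al * D z) < 0" using h(1) by (simp add: mult_pos_neg)
    then have "G (t0 + h) < G t0" using z(3) by simp
    moreover have "G t0 \<le> G (t0 + h)" using min h t0 by simp
    ultimately show False by simp
  qed
qed



lemma pair_improve_lt:
  fixes al a b :: real
  assumes al: "0 < al" "al \<le> 1" and ab: "1 < b" "b < a"
  shows "\<exists>a' b'. a' \<ge> 1 \<and> b' \<ge> 1 \<and> a' * b' = a * b \<and>
           (a' - 1) powr al + (b' - 1) powr al < (a - 1) powr al + (b - 1) powr al"
proof -
  define K where "K = exp ((ln a + ln b)/2)"
  define t0 where "t0 = (ln a - ln b)/2"
  have lb: "0 < ln b" and lab: "ln b < ln a" using ab by auto
  have lnK: "ln K = (ln a + ln b)/2" by (simp add: K_def)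
  have K1: "1 < K" unfolding K_def using lb lab by simp
  have t0: "0 < t0" "t0 < ln K" unfolding t0_def lnK using lb lab by auto
  have ea: "K * exp t0 = a" unfolding K_def t0_def using ab
    by (simp add: exp_add[symmetric] field_simps)
  have eb: "K * exp (-t0) = b" unfolding K_def t0_def using ab
    by (simp add: exp_add[symmetric] field_simps)
  obtain t where t: "t \<in> {0..ln K}" and lt: "(K*exp t - 1) powr al + (K*exp(-t) - 1) powr al
          < (K*exp t0 - 1) powr al + (K*exp(-t0) - 1) powr al"
    using core[OF al K1 t0] by blast
  have Kexp: "K * exp s = exp (ln K + s)" for s using K1 by (simp add: exp_add)
  show ?thesis
  proof (intro exI conjI)
    show "1 \<le> K * exp t" unfolding Kexp using t K1 by simp
    show "1 \<le> K * exp (-t)" unfolding Kexp using t by simp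
    show "K * exp t * (K * exp (-t)) = a * b"
      using ea eb by (simp add: exp_minus field_simps)
  next
    show "(K * exp t - 1) powr al + (K * exp (- t) - 1) powr al < (a - 1) powr al + (b - 1) powr al"
      using lt unfolding ea eb .
  qed
qed

lemma pair_improve:
  fixes al a b :: real
  assumes al: "0 < al" "al \<le> 1" and ab: "1 < a" "1 < b" "a \<noteq> b"
  shows "\<exists>a' b'. a' \<ge> 1 \<and> b' \<ge> 1 \<and> a' * b' = a * b \<and>
           (a' - 1) powr al + (b' - 1) powr al < (a - 1) powr al + (b - 1) powr al"
proof (cases "b < a")
  case True
  then show ?thesis using pair_improve_lt[OF al ab(2) True] by blast
next
  case False
  then have "a < b" using ab by simp
  then obtain a' b' where "a' \<ge> 1" "b' \<ge> 1" "a' * b' = b * a"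
      "(a' - 1) powr al + (b' - 1) powr al < (b - 1) powr al + (a - 1) powr al"
    using pair_improve_lt[OF al ab(1)] by blast
  then show ?thesis by (intro exI[of _ b'] exI[of _ a']) (auto simp: algebra_simps)
qed

lemma sum_two_change:
  fixes g h :: "nat \<Rightarrow> real"
  assumes "finite S" "n \<in> S" "n' \<in> S" "n \<noteq> n'" "\<And>m. m \<in> S \<Longrightarrow> m \<noteq> n \<Longrightarrow> m \<noteq> n' \<Longrightarrow> g m = h m"
  shows "sum g S - (g n + g n') = sum h S - (h n + h n')"
proof -
  have r: "sum f S = f n + (f n' + sum f (S - {n} - {n'}))" for f :: "nat \<Rightarrow> real"
    using assms(1-4) by (simp add: sum.remove[of S n] sum.remove[of "S - {n}" n'])
  have "sum g (S - {n} - {n'}) = sum h (S - {n} - {n'})"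
    by (rule sum.cong) (use assms(5) in auto)
  then show ?thesis unfolding r[of g] r[of h] by simp
qed

theorem lemma3:
  fixes N :: nat and sigma2 R gamma alpha :: real and p :: "nat \<Rightarrow> real"
  assumes "N \<ge> 1" and "sigma2 > 0" and "R > 0" and "gamma > 0"
    and "0 < alpha" and "alpha \<le> 1"
    and "optimal N sigma2 R gamma alpha p"
  shows "\<forall>n<N. \<forall>n'<N. p n > 0 \<and> p n' > 0 \<longrightarrow> p n = p n'"
proof (intro allI impI, rule ccontr)
  fix n n' assume nN: "n < N" and n'N: "n' < N" and pos: "p n > 0 \<and> p n' > 0" and ne: "p n \<noteq> p n'"
  have s2: "sigma2 > 0" by fact
  have feas: "feasible N sigma2 R p" and opt: "\<And>q. feasible N sigma2 R q \<Longrightarrow>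
      objective N gamma alpha p \<le> objective N gamma alpha q"
    using assms(7) unfolding optimal_def by auto
  have nn: "n \<noteq> n'" using ne by auto
  define a where "a = 1 + p n / sigma2"
  define b where "b = 1 + p n' / sigma2"
  have a1: "1 < a" and b1: "1 < b" using pos s2 by (auto simp: a_def b_def)
  have "a \<noteq> b" using ne s2 by (auto simp: a_def b_def)
  then obtain a' b' where a': "a' \<ge> 1" and b': "b' \<ge> 1" and prod: "a' * b' = a * b"
    and lt: "(a' - 1) powr alpha + (b' - 1) powr alpha < (a - 1) powr alpha + (b - 1) powr alpha"
    using pair_improve[OF assms(5,6) a1 b1] by blast
  define q where "q = p(n := sigma2 * (a' - 1), n' := sigma2 * (b' - 1))"
  have qn: "q n = sigma2 * (a' - 1)" "q n' = sigma2 * (b' - 1)" using nn by (simp_all add: q_def)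
  have qo: "q m = p m" if "m \<noteq> n" "m \<noteq> n'" for m using that by (simp add: q_def)
  have pn: "p n = sigma2 * (a - 1)" "p n' = sigma2 * (b - 1)" using s2 by (simp_all add: a_def b_def)
  have fin: "finite {..<N}" by simp
  have mem: "n \<in> {..<N}" "n' \<in> {..<N}" using nN n'N by simp_all
  have nonneg: "\<forall>m<N. q m \<ge> 0"
  proof (intro allI impI)
    fix m assume "m < N"
    show "q m \<ge> 0"
    proof (cases "m = n \<or> m = n'")
      case True then show ?thesis using qn a' b' s2 by auto
    next
      case False then show ?thesis using qo[of m] feas \<open>m < N\<close> unfolding feasible_def by auto
    qed
  qed
  define fq where "fq = (\<lambda>m. log 2 (1 + q m / sigma2))"
  define fp where "fp = (\<lambda>m. log 2 (1 + p m / sigma2))"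
  have "fq n + fq n' = log 2 (a' * b')"
    unfolding fq_def qn using s2 a' b' by (simp add: log_mult)
  also have "\<dots> = log 2 (a * b)" by (simp add: prod)
  also have "\<dots> = fp n + fp n'" unfolding fp_def a_def b_def using a1 b1
    by (simp add: log_mult a_def b_def)
  finally have fe: "fq n + fq n' = fp n + fp n'" .
  have "sum fq {..<N} - (fq n + fq n') = sum fp {..<N} - (fp n + fp n')"
    by (rule sum_two_change[OF fin mem nn]) (simp add: fq_def fp_def qo)
  then have "sum fq {..<N} = sum fp {..<N}" using fe by simp
  then have "feasible N sigma2 R q" using feas nonneg unfolding feasible_def fq_def fp_def by simp
  then have le: "objective N gamma alpha p \<le> objective N gamma alpha q" by (rule opt)
  define gq where "gq = (\<lambda>m. q m powr alpha)"
  define gp where "gp = (\<lambda>m. p m powr alpha)"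
  have "gq n + gq n' = sigma2 powr alpha * ((a' - 1) powr alpha + (b' - 1) powr alpha)"
    unfolding gq_def qn using powr_mult[of sigma2 "a'-1" alpha] powr_mult[of sigma2 "b'-1" alpha] s2 a' b'
    by (simp add: distrib_left)
  also have "\<dots> < sigma2 powr alpha * ((a - 1) powr alpha + (b - 1) powr alpha)"
    using lt s2 by simp
  also have "\<dots> = gp n + gp n'"
    unfolding gp_def pn using powr_mult[of sigma2 "a-1" alpha] powr_mult[of sigma2 "b-1" alpha] s2 a1 b1
    by (simp add: distrib_left)
  finally have glt: "gq n + gq n' < gp n + gp n'" .
  have "sum gq {..<N} - (gq n + gq n') = sum gp {..<N} - (gp n + gp n')"
    by (rule sum_two_change[OF fin mem nn]) (simp add: gq_def gp_def qo)
  then have "sum gq {..<N} < sum gp {..<N}" using glt by simp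
  moreover have "gamma / real N > 0" using assms(1,4) by simp
  ultimately have "objective N gamma alpha q < objective N gamma alpha p"
    unfolding objective_def gq_def gp_def by (intro mult_strict_left_mono)
  then show False using le by simp
qed

end
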